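(* (1) If $\Sigma;\Gamma\vdash\tau:m$ and $\tau$ contains no equality guard, then there exists a context $\Gamma_{\min}$ (over the same variables as $\Gamma$) with $\Sigma;\Gamma_{\min}\vdash\tau:m$ and $\Gamma_{\min}\le\Gamma'$ for every context $\Gamma'$ over those variables with $\Sigma;\Gamma'\vdash\tau:m$. (2) If $\Sigma_0\vdash\sigma\dashv\Sigma$ where the definition block $\sigma$ contains no equality guard, then there exists a minimal signature $\Sigma_{\min}$ such that $\Sigma_0\vdash\sigma\dashv\Sigma_{\min}$, i.e. for every $\Sigma'$ with $\Sigma_0\vdash\sigma\dashv\Sigma'$, each parameter mode in $\Sigma_{\min}$ is $\le$ the corresponding parameter mode in $\Sigma'$.
   Context: Type expressions: $\tau,\kappa ::= \alpha \mid \mathsf{float}\mid\mathsf{int}\mid\mathsf{bool}\mid t(\tau_1,\dots,\tau_n)\mid \tau\to\kappa\mid \tau_1\times\dots\times\tau_n\mid \forall\alpha.\tau\mid\exists\alpha.\tau\mid (\tau \text{ with } \kappa_1=\kappa_2)$ (equality guard). Datatypes: $A ::= C_1\text{ of }\tau_1\mid\dots\mid C_n\text{ of }\tau_n$ (boxed variant) $\mid C\text{ of }\tau$ [unboxed] $\mid \{l_1:\tau_1;\dots;l_n:\tau_n\}$ (boxed record, fields possibly mutable) $\mid \{l:\tau\}$ [unboxed] $\mid \tau$ (type synonym). A definition block $\sigma$ is a list of mutually recursive definitions $t_i(\vec\alpha_i):=A_i$, $1\le i\le n$. Modes $\mathsf{Ind}<\mathsf{Sep}<\mathsf{Deepsep}$;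 composition $\mathsf{Ind}\circ m=\mathsf{Ind}$, $\mathsf{Sep}\circ m=m$, $\mathsf{Deepsep}\circ m=\mathsf{Deepsep}$. Contexts $\Gamma=\alpha_1:m_1,\dots$ ordered pointwise (same variables). A mode signature $\Sigma$ is a list of entries $t(\alpha_1:m_1,\dots,\alpha_n:m_n)$. Type-level judgment $\Sigma;\Gamma\vdash\tau:m$: (variable) $(\alpha:m)\in\Gamma$ gives $\alpha:m$; (constructor) $t(\alpha_1:m_1,\dots,\alpha_n:m_n)\in\Sigma$ and $\tau_i:m\circ m_i$ for all $i$ give $t(\tau_1,\dots,\tau_n):m$; (arrow) $\tau:m\circ\mathsf{Ind}$, $\kappa:m\circ\mathsf{Ind}$ give $\tau\to\kappa:m$; (product) $\tau_i:m\circ\mathsf{Ind}$ for all $i$ gives $\tau_1\times\dots\times\tau_n:m$; (forall) $\Sigma;\Gamma,\alpha:n\vdash\tau:m$ for some $n$ gives $\Sigma;\Gamma\vdash\forall\alpha.\tau:m$; (exists) $\Sigma;\Gamma,\alpha:\mathsf{Ind}\vdash\tau:m$ gives $\Sigma;\Gamma\vdash\exists\alpha.\tau:m$; (conversion) $\tau:m$ and $m\ge n$ give $\tau:n$; (guard) if for every $\Gamma'\ge\Gamma$ with $\Sigma;\Gamma'\vdash\kappa_1=\kappa_2$ we have $\Sigma;\Gamma'\vdash\tau:m$, then $\Sigma;\Gamma\vdash(\tau\text{ with }\kappa_1=\kappa_2):m$, where $\Sigma;\Gamma\vdash\tau_1=\tau_2$ means for all $m$, $\Sigma;\Gamma\vdash\tau_1:m\iff\Sigma;\Gamma\vdash\tau_2:m$.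 Datatype judgment $\Sigma;\Gamma\vdash_{\mathsf{decl}}A$: boxed variants and boxed records are always accepted; an unboxed variant $C\text{ of }\tau$, an unboxed record $\{l:\tau\}$, or a type synonym $\tau$ is accepted iff $\Sigma;\Gamma\vdash\tau:\mathsf{Sep}$. Block judgment: $\Sigma_0\vdash(t_i(\vec\alpha_i):=A_i)_{1\le i\le n}\dashv\Sigma_{\mathsf{block}}$ holds when $\Sigma_{\mathsf{block}}=t_1(\vec{\alpha_1}:\vec{m_1}),\dots,t_n(\vec{\alpha_n}:\vec{m_n})$ for some modes $\vec{m_i}$ and, for each $i$, $\Sigma_0,\Sigma_{\mathsf{block}};\vec{\alpha_i}:\vec{m_i}\vdash_{\mathsf{decl}}A_i$. *)

theory Defs
  imports Main
begin

datatype mode = Ind | Sep | Deepsep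

fun mode_rank :: "mode \<Rightarrow> nat" where
  "mode_rank Ind = 0" | "mode_rank Sep = 1" | "mode_rank Deepsep = 2"

instantiation mode :: linorder
begin
definition less_eq_mode :: "mode \<Rightarrow> mode \<Rightarrow> bool" where
  "less_eq_mode a b \<longleftrightarrow> mode_rank a \<le> mode_rank b"
definition less_mode :: "mode \<Rightarrow> mode \<Rightarrow> bool" where
  "less_mode a b \<longleftrightarrow> mode_rank a < mode_rank b"
instance
proof
  fix x y :: mode
  show "x \<le> y \<Longrightarrow> y \<le> x \<Longrightarrow> x = y"
    by (cases x; cases y; simp add: less_eq_mode_def)
qed (auto simp: less_eq_mode_def less_mode_def)
end

fun mode_comp :: "mode \<Rightarrow> mode \<Rightarrow> mode" where
  "mode_comp Ind m = Ind"
| "mode_comp Sep m = m"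
| "mode_comp Deepsep m = Deepsep"

type_synonym tvar = string
type_synonym tname = string

datatype ty =
    TVar tvar
  | TFloat
  | TInt
  | TBool
  | TCon tname "ty list"
  | TArrow ty ty
  | TProd "ty list"
  | TForall tvar ty
  | TExists tvar ty
  | TWith ty ty ty                 \<comment> \<open>(tau with kappa_1 = kappa_2)\<close>

fun no_guard :: "ty \<Rightarrow> bool" where
  "no_guard (TVar a) = True"
| "no_guard TFloat = True"
| "no_guard TInt = True"
| "no_guard TBool = True"
| "no_guard (TCon t ts) = (\<forall>x\<in>set ts. no_guard x)"
| "no_guard (TArrow a b) = (no_guard a \<and> no_guard b)"
| "no_guard (TProd ts) = (\<forall>x\<in>set ts. no_guard x)"
| "no_guard (TForall a t) = no_guard t"
| "no_guard (TExists a t) = no_guard t"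
| "no_guard (TWith t k1 k2) = False"

type_synonym ctx = "tvar \<rightharpoonup> mode"

definition ctx_le :: "ctx \<Rightarrow> ctx \<Rightarrow> bool" where
  "ctx_le G G' \<longleftrightarrow> dom G = dom G' \<and>
     (\<forall>a m m'. G a = Some m \<longrightarrow> G' a = Some m' \<longrightarrow> m \<le> m')"

type_synonym sig = "(tname \<times> (tvar \<times> mode) list) list"

text \<open>Because of the (non-monotone) guard rule, the judgment cannot be given as an
  inductive predicate in HOL; since every rule other than conversion derives a judgment
  about tau from judgments about strict subterms of tau, it is defined by structural
  recursion on tau.  Each clause is: the unique syntax-directed rule for the head
  constructor, concluding at some mode m', followed by the conversion rule (m' >= m).\<close>

function has_mode :: "sig \<Rightarrow> ctx \<Rightarrow> ty \<Rightarrow> mode \<Rightarrow> bool" where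
  "has_mode S G (TVar a) m = (\<exists>m'. G a = Some m' \<and> m \<le> m')"
| "has_mode S G TFloat m = False"
| "has_mode S G TInt m = False"
| "has_mode S G TBool m = False"
| "has_mode S G (TCon t ts) m =
     (\<exists>m'. m \<le> m' \<and> (\<exists>ps. (t, ps) \<in> set S \<and> length ts = length ps \<and>
        (\<forall>(x, p) \<in> set (zip ts ps). has_mode S G x (mode_comp m' (snd p)))))"
| "has_mode S G (TArrow a b) m =
     (\<exists>m'. m \<le> m' \<and> has_mode S G a (mode_comp m' Ind) \<and> has_mode S G b (mode_comp m' Ind))"
| "has_mode S G (TProd ts) m =
     (\<exists>m'. m \<le> m' \<and> (\<forall>x\<in>set ts. has_mode S G x (mode_comp m' Ind)))"
| "has_mode S G (TForall a t) m =
     (\<exists>m'. m \<le> m' \<and> (\<exists>n. has_mode S (G(a \<mapsto> n)) t m'))"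
| "has_mode S G (TExists a t) m =
     (\<exists>m'. m \<le> m' \<and> has_mode S (G(a \<mapsto> Ind)) t m')"
| "has_mode S G (TWith t k1 k2) m =
     (\<exists>m'. m \<le> m' \<and> (\<forall>G'. ctx_le G G' \<longrightarrow>
        (\<forall>n. has_mode S G' k1 n \<longleftrightarrow> has_mode S G' k2 n) \<longrightarrow> has_mode S G' t m'))"
  by pat_completeness auto
termination
  by (relation "measure (\<lambda>(S, G, t, m). size t)")
     (auto dest!: set_zip_leftD simp: less_Suc_eq_le intro: size_list_estimation')

type_synonym cname = string
type_synonym label = string

datatype decl =
    Variant "(cname \<times> ty) list"              \<comment> \<open>boxed variant\<close>
  | UVariant cname ty                         \<comment> \<open>[unboxed] C of tau\<close>
  | Record "(label \<times> bool \<times> ty) list"      \<comment> \<open>boxed record; bool = mutable flag\<close>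
  | URecord label ty                          \<comment> \<open>[unboxed] {l : tau}\<close>
  | Synonym ty

fun decl_no_guard :: "decl \<Rightarrow> bool" where
  "decl_no_guard (Variant cs) = (\<forall>(c, t)\<in>set cs. no_guard t)"
| "decl_no_guard (UVariant c t) = no_guard t"
| "decl_no_guard (Record fs) = (\<forall>(l, mut, t)\<in>set fs. no_guard t)"
| "decl_no_guard (URecord l t) = no_guard t"
| "decl_no_guard (Synonym t) = no_guard t"

fun decl_ok :: "sig \<Rightarrow> ctx \<Rightarrow> decl \<Rightarrow> bool" where
  "decl_ok S G (Variant cs) = True"
| "decl_ok S G (Record fs) = True"
| "decl_ok S G (UVariant c t) = has_mode S G t Sep"
| "decl_ok S G (URecord l t) = has_mode S G t Sep"
| "decl_ok S G (Synonym t) = has_mode S G t Sep"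

type_synonym block = "(tname \<times> tvar list \<times> decl) list"

definition block_ok :: "sig \<Rightarrow> block \<Rightarrow> sig \<Rightarrow> bool" where
  "block_ok S0 bl Sb \<longleftrightarrow> length Sb = length bl \<and>
     (\<forall>i<length bl. fst (Sb ! i) = fst (bl ! i) \<and>
        map fst (snd (Sb ! i)) = fst (snd (bl ! i)) \<and>
        decl_ok (S0 @ Sb) (map_of (snd (Sb ! i))) (snd (snd (bl ! i))))"

definition block_no_guard :: "block \<Rightarrow> bool" where
  "block_no_guard bl \<longleftrightarrow> (\<forall>(t, as, A)\<in>set bl. decl_no_guard A)"

definition sig_le :: "sig \<Rightarrow> sig \<Rightarrow> bool" where
  "sig_le S S' \<longleftrightarrow> list_all2 (\<lambda>(t, ps) (t', ps'). t = t' \<and>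
      list_all2 (\<lambda>(a, m) (a', m'). a = a' \<and> m \<le> m') ps ps') S S'"

definition sig_wf :: "sig \<Rightarrow> bool" where
  "sig_wf S \<longleftrightarrow> distinct (map fst S)"

end

theory Submission
  imports Defs
begin

lemma mode_UNIV: "(UNIV :: mode set) = {Ind, Sep, Deepsep}"
  by (metis (full_types) UNIV_eq_I insertCI mode.exhaust)

lemma finite_mode_set: "finite (A :: mode set)"
proof -
  have "finite (UNIV :: mode set)" by (simp add: mode_UNIV)
  then show ?thesis by (rule finite_subset[OF subset_UNIV])
qed

lemma comp_mono: "a \<le> a' \<Longrightarrow> b \<le> b' \<Longrightarrow> mode_comp a b \<le> mode_comp a' b'"
  by (cases a; cases a'; cases b; cases b'; simp add: less_eq_mode_def)

lemma has_mode_anti: "has_mode S G t m \<Longrightarrow> m0 \<le> m \<Longrightarrow> has_mode S G t m0"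
  by (cases t) (auto intro: order_trans)

fun fv :: "ty \<Rightarrow> tvar set" where
  "fv (TVar a) = {a}"
| "fv TFloat = {}"
| "fv TInt = {}"
| "fv TBool = {}"
| "fv (TCon c ts) = (\<Union>x\<in>set ts. fv x)"
| "fv (TArrow a b) = fv a \<union> fv b"
| "fv (TProd ts) = (\<Union>x\<in>set ts. fv x)"
| "fv (TForall a t) = fv t - {a}"
| "fv (TExists a t) = fv t - {a}"
| "fv (TWith t k1 k2) = fv t \<union> fv k1 \<union> fv k2"

lemma finite_fv: "finite (fv t)"
  by (induction t) auto

lemma zip_cong_aux:
  assumes "\<And>x p. x \<in> set ts \<Longrightarrow> P x p = Q x p"
  shows "(\<forall>(x, p)\<in>set (zip ts ps). P x p) = (\<forall>(x, p)\<in>set (zip ts ps). Q x p)"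
proof -
  have "\<forall>(x, p)\<in>set (zip ts ps). P x p = Q x p" using assms by (auto dest: set_zip_leftD)
  then show ?thesis by fastforce
qed

lemma has_mode_local:
  "no_guard t \<Longrightarrow> (\<forall>a\<in>fv t. G a = G' a) \<Longrightarrow> has_mode S G t m = has_mode S G' t m"
proof (induction t arbitrary: G G' m)
  case (TCon c ts)
  have "\<And>x m. x \<in> set ts \<Longrightarrow> has_mode S G x m = has_mode S G' x m"
    using TCon by auto
  then show ?case
    by (simp only: has_mode.simps zip_cong_aux[where P="\<lambda>x p. has_mode S G x (mode_comp _ (snd p))"])
next
  case (TArrow t1 t2)
  have "\<And>m. has_mode S G t1 m = has_mode S G' t1 m" "\<And>m. has_mode S G t2 m = has_mode S G' t2 m"
    using TArrow by auto
  then show ?case by simp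
next
  case (TProd ts)
  have "\<And>x m. x \<in> set ts \<Longrightarrow> has_mode S G x m = has_mode S G' x m"
    using TProd by auto
  then show ?case by simp
next
  case (TForall a t)
  have "\<And>n m. has_mode S (G(a \<mapsto> n)) t m = has_mode S (G'(a \<mapsto> n)) t m"
    using TForall by (intro TForall.IH) auto
  then show ?case by simp
next
  case (TExists a t)
  have "\<And>n m. has_mode S (G(a \<mapsto> n)) t m = has_mode S (G'(a \<mapsto> n)) t m"
    using TExists by (intro TExists.IH) auto
  then show ?case by simp
qed auto

definition cmeet :: "ctx \<Rightarrow> ctx \<Rightarrow> ctx" where
  "cmeet G1 G2 = (\<lambda>a. case G1 a of None \<Rightarrow> None
      | Some x \<Rightarrow> (case G2 a of None \<Rightarrow> None | Some y \<Rightarrow> Some (min x y)))"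

lemma cmeet_upd: "cmeet (G1(a \<mapsto> n1)) (G2(a \<mapsto> n2)) = (cmeet G1 G2)(a \<mapsto> min n1 n2)"
  by (rule ext) (simp add: cmeet_def split: option.splits)

definition pmeet :: "(tvar \<times> mode) list \<Rightarrow> (tvar \<times> mode) list \<Rightarrow> (tvar \<times> mode) list" where
  "pmeet ps1 ps2 = map2 (\<lambda>(a, m) (a', m'). (a, min m m')) ps1 ps2"

definition smeet :: "sig \<Rightarrow> sig \<Rightarrow> sig" where
  "smeet S1 S2 = map2 (\<lambda>(c, ps) (c', ps'). (c, pmeet ps ps')) S1 S2"

lemma pmeet_nth: "j < length ps1 \<Longrightarrow> j < length ps2 \<Longrightarrow>
  pmeet ps1 ps2 ! j = (fst (ps1 ! j), min (snd (ps1 ! j)) (snd (ps2 ! j)))"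
  by (simp add: pmeet_def case_prod_beta)

lemma pmeet_len: "length (pmeet ps1 ps2) = min (length ps1) (length ps2)"
  by (simp add: pmeet_def)

lemma smeet_nth: "i < length S1 \<Longrightarrow> i < length S2 \<Longrightarrow>
  smeet S1 S2 ! i = (fst (S1 ! i), pmeet (snd (S1 ! i)) (snd (S2 ! i)))"
  by (simp add: smeet_def case_prod_beta)

lemma smeet_len: "length (smeet S1 S2) = min (length S1) (length S2)"
  by (simp add: smeet_def)

lemma pmeet_self: "pmeet ps ps = ps"
  by (induction ps) (auto simp: pmeet_def)

lemma smeet_self: "smeet S S = S"
  by (induction S) (auto simp: smeet_def pmeet_self)

lemma smeet_append: "smeet (S0 @ S1) (S0 @ S2) = S0 @ smeet S1 S2"
  by (simp add: smeet_def smeet_self[unfolded smeet_def])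

lemma cmeet_self: "cmeet G G = G"
  by (rule ext) (simp add: cmeet_def split: option.splits)

lemma map_of_pmeet: "map fst ps1 = map fst ps2 \<Longrightarrow>
   map_of (pmeet ps1 ps2) = cmeet (map_of ps1) (map_of ps2)"
proof (induction ps1 arbitrary: ps2)
  case Nil then show ?case by (auto simp: pmeet_def cmeet_def)
next
  case (Cons p ps1)
  then obtain q ps2' where "ps2 = q # ps2'" by (cases ps2) auto
  with Cons show ?case
    by (auto simp: pmeet_def cmeet_def intro!: ext split: option.splits prod.splits)
qed


lemma cmeet_Some: "G1 a = Some x \<Longrightarrow> G2 a = Some y \<Longrightarrow> cmeet G1 G2 a = Some (min x y)"
  by (simp add: cmeet_def)

lemma has_mode_meet:
  assumes sh1: "map fst S1 = map fst S2" and sh2: "distinct (map fst S1)"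
    and sh3: "\<forall>i<length S1. length (snd (S1 ! i)) = length (snd (S2 ! i))"
  shows "no_guard t \<Longrightarrow> has_mode S1 G1 t m \<Longrightarrow> has_mode S2 G2 t m \<Longrightarrow>
     has_mode (smeet S1 S2) (cmeet G1 G2) t m"
proof (induction t arbitrary: G1 G2 m)
  case (TVar a)
  then obtain x y where "G1 a = Some x" "G2 a = Some y" "m \<le> x" "m \<le> y" by auto
  then show ?case by (auto simp: cmeet_Some)
next
  case (TCon c ts)
  have len: "length S1 = length S2" using sh1 by (metis length_map)
  from TCon.prems obtain m1 ps1 where m1: "m \<le> m1" "(c, ps1) \<in> set S1" "length ts = length ps1"
    "\<forall>(x, p)\<in>set (zip ts ps1). has_mode S1 G1 x (mode_comp m1 (snd p))" by auto
  from TCon.prems obtain m2 ps2 where m2: "m \<le> m2" "(c, ps2) \<in> set S2" "length ts = length ps2"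
    "\<forall>(x, p)\<in>set (zip ts ps2). has_mode S2 G2 x (mode_comp m2 (snd p))" by auto
  obtain i where i: "i < length S1" "S1 ! i = (c, ps1)" using m1(2) by (metis in_set_conv_nth)
  obtain k where k: "k < length S2" "S2 ! k = (c, ps2)" using m2(2) by (metis in_set_conv_nth)
  have "map fst S1 ! k = c" using k sh1 by (metis fst_conv nth_map)
  moreover have "map fst S1 ! i = c" using i by simp
  ultimately have "i = k" using sh2 i k len nth_eq_iff_index_eq[OF sh2, of i k] by simp
  with k have k': "S2 ! i = (c, ps2)" by simp
  define pm where "pm = pmeet ps1 ps2"
  have mem: "(c, pm) \<in> set (smeet S1 S2)"
    using i k' len unfolding pm_def
    by (metis (no_types, lifting) fst_conv min.idem smeet_len smeet_nth snd_conv nth_mem)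
  have lpm: "length pm = length ts" using m1(3) m2(3) by (simp add: pm_def pmeet_len)
  have "\<forall>(x, p)\<in>set (zip ts pm). has_mode (smeet S1 S2) (cmeet G1 G2) x (mode_comp m (snd p))"
  proof (rule ballI, clarify)
    fix x p assume "(x, p) \<in> set (zip ts pm)"
    then obtain j where j: "j < length ts" "j < length pm" and xp: "x = ts ! j" "p = pm ! j"
      by (auto simp: set_zip)
    have pj: "pm ! j = (fst (ps1 ! j), min (snd (ps1 ! j)) (snd (ps2 ! j)))"
      using j m1(3) m2(3) by (simp add: pm_def pmeet_nth)
    have h1: "has_mode S1 G1 (ts ! j) (mode_comp m1 (snd (ps1 ! j)))"
      using m1(4) nth_mem[of j "zip ts ps1"] j m1(3) by fastforce
    have h2: "has_mode S2 G2 (ts ! j) (mode_comp m2 (snd (ps2 ! j)))"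
      using m2(4) nth_mem[of j "zip ts ps2"] j m2(3) by fastforce
    have h1': "has_mode S1 G1 (ts ! j) (mode_comp m (snd (pm ! j)))"
      using pj by (simp add: has_mode_anti[OF h1] comp_mono[OF m1(1)])
    have h2': "has_mode S2 G2 (ts ! j) (mode_comp m (snd (pm ! j)))"
      using pj by (simp add: has_mode_anti[OF h2] comp_mono[OF m2(1)])
    show "has_mode (smeet S1 S2) (cmeet G1 G2) x (mode_comp m (snd p))"
      using TCon.IH[OF nth_mem[OF j(1)] _ h1' h2'] TCon.prems(1) j xp by auto
  qed
  then have "\<exists>ps. (c, ps) \<in> set (smeet S1 S2) \<and> length ts = length ps \<and>
     (\<forall>(x, p)\<in>set (zip ts ps). has_mode (smeet S1 S2) (cmeet G1 G2) x (mode_comp m (snd p)))"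
    using mem lpm by metis
  then show ?case by (simp only: has_mode.simps) blast
next
  case (TArrow a b)
  from TArrow.prems obtain m1 m2 where mm: "m \<le> m1" "m \<le> m2"
    "has_mode S1 G1 a (mode_comp m1 Ind)" "has_mode S2 G2 a (mode_comp m2 Ind)"
    "has_mode S1 G1 b (mode_comp m1 Ind)" "has_mode S2 G2 b (mode_comp m2 Ind)" by auto
  have c1: "mode_comp m Ind \<le> mode_comp m1 Ind" "mode_comp m Ind \<le> mode_comp m2 Ind"
    using mm(1,2) by (auto intro: comp_mono)
  have "has_mode (smeet S1 S2) (cmeet G1 G2) a (mode_comp m Ind)"
    using TArrow.IH(1) TArrow.prems(1) has_mode_anti[OF mm(3) c1(1)] has_mode_anti[OF mm(4) c1(2)] by auto
  moreover have "has_mode (smeet S1 S2) (cmeet G1 G2) b (mode_comp m Ind)"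
    using TArrow.IH(2) TArrow.prems(1) has_mode_anti[OF mm(5) c1(1)] has_mode_anti[OF mm(6) c1(2)] by auto
  ultimately show ?case by auto
next
  case (TProd ts)
  have "\<forall>x\<in>set ts. has_mode (smeet S1 S2) (cmeet G1 G2) x (mode_comp m Ind)"
  proof
    fix x assume x: "x \<in> set ts"
    from TProd.prems obtain m1 m2 where "m \<le> m1" "m \<le> m2"
      "has_mode S1 G1 x (mode_comp m1 Ind)" "has_mode S2 G2 x (mode_comp m2 Ind)"
      using x by auto
    then have "has_mode S1 G1 x (mode_comp m Ind)" "has_mode S2 G2 x (mode_comp m Ind)"
      by (auto intro: has_mode_anti comp_mono)
    then show "has_mode (smeet S1 S2) (cmeet G1 G2) x (mode_comp m Ind)"
      using TProd x by auto
  qed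
  then show ?case by auto
next
  case (TForall a t)
  from TForall.prems obtain m1 n1 m2 n2 where "m \<le> m1" "m \<le> m2"
    "has_mode S1 (G1(a \<mapsto> n1)) t m1" "has_mode S2 (G2(a \<mapsto> n2)) t m2" by auto
  then have "has_mode S1 (G1(a \<mapsto> n1)) t m" "has_mode S2 (G2(a \<mapsto> n2)) t m"
    by (auto intro: has_mode_anti)
  note h = this
  from h have "has_mode (smeet S1 S2) (cmeet (G1(a \<mapsto> n1)) (G2(a \<mapsto> n2))) t m"
    using TForall.IH[OF _ h] TForall.prems(1) by (simp only: no_guard.simps)
  then have "has_mode (smeet S1 S2) ((cmeet G1 G2)(a \<mapsto> min n1 n2)) t m"
    by (simp only: cmeet_upd)
  then show ?case by auto
next
  case (TExists a t)
  from TExists.prems obtain m1 m2 where "m \<le> m1" "m \<le> m2"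
    "has_mode S1 (G1(a \<mapsto> Ind)) t m1" "has_mode S2 (G2(a \<mapsto> Ind)) t m2" by auto
  then have "has_mode S1 (G1(a \<mapsto> Ind)) t m" "has_mode S2 (G2(a \<mapsto> Ind)) t m"
    by (auto intro: has_mode_anti)
  note h = this
  from h have "has_mode (smeet S1 S2) (cmeet (G1(a \<mapsto> Ind)) (G2(a \<mapsto> Ind))) t m"
    using TExists.IH[OF _ h] TExists.prems(1) by (simp only: no_guard.simps)
  then have "has_mode (smeet S1 S2) ((cmeet G1 G2)(a \<mapsto> min Ind Ind)) t m"
    by (simp only: cmeet_upd)
  then show ?case by auto
qed auto

lemma abstract_min:
  fixes val :: "'c \<Rightarrow> 'x \<Rightarrow> mode"
  assumes x0: "x0 \<in> V" and fin: "finite C"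
    and closed: "\<And>x y. x \<in> V \<Longrightarrow> y \<in> V \<Longrightarrow> meet x y \<in> V"
    and le: "\<And>c x y. c \<in> C \<Longrightarrow> x \<in> V \<Longrightarrow> y \<in> V \<Longrightarrow> val c (meet x y) \<le> val c x \<and> val c (meet x y) \<le> val c y"
  shows "\<exists>z\<in>V. \<forall>c\<in>C. \<forall>x\<in>V. val c z \<le> val c x"
  using fin le
proof (induction C rule: finite_induct)
  case empty then show ?case using x0 by auto
next
  case (insert c C)
  then obtain z where z: "z \<in> V" "\<forall>c\<in>C. \<forall>x\<in>V. val c z \<le> val c x" by auto
  define M where "M = val c ` V"
  have "M \<noteq> {}" using x0 by (auto simp: M_def)
  then have "Min M \<in> M" using finite_mode_set by (intro Min_in) auto
  then obtain w where w: "w \<in> V" "val c w = Min M" by (auto simp: M_def)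
  have wmin: "\<forall>x\<in>V. val c w \<le> val c x" using w finite_mode_set by (auto simp: M_def)
  show ?case
  proof (intro bexI[of _ "meet z w"] ballI)
    show "meet z w \<in> V" using z w closed by auto
    fix c' x assume c': "c' \<in> insert c C" and x: "x \<in> V"
    show "val c' (meet z w) \<le> val c' x"
    proof (cases "c' = c")
      case True
      then show ?thesis using insert.prems[of c z w] z w wmin x by (meson insertI1 order_trans)
    next
      case False
      then have "c' \<in> C" using c' by auto
      then show ?thesis using insert.prems[of c' z w] z w x by (meson insertI2 order_trans)
    qed
  qed
qed


definition shape_ok :: "sig \<Rightarrow> sig \<Rightarrow> bool" where
  "shape_ok S1 S2 \<longleftrightarrow> map fst S1 = map fst S2 \<and> distinct (map fst S1) \<and>
     (\<forall>i<length S1. length (snd (S1 ! i)) = length (snd (S2 ! i)))"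

lemma decl_meet:
  assumes "shape_ok S1 S2" "decl_ok S1 G1 d" "decl_ok S2 G2 d" "decl_no_guard d"
  shows "decl_ok (smeet S1 S2) (cmeet G1 G2) d"
  using assms has_mode_meet[of S1 S2] unfolding shape_ok_def
  by (cases d) auto

lemma block_facts:
  assumes "block_ok S0 bl S"
  shows "length S = length bl" "map fst S = map fst bl"
    "\<And>i. i < length bl \<Longrightarrow> length (snd (S ! i)) = length (fst (snd (bl ! i)))"
    "\<And>i. i < length bl \<Longrightarrow> map fst (snd (S ! i)) = fst (snd (bl ! i))"
proof -
  show l: "length S = length bl" using assms by (simp add: block_ok_def)
  show "map fst S = map fst bl" using assms l by (intro nth_equalityI) (auto simp: block_ok_def)
  show "\<And>i. i < length bl \<Longrightarrow> map fst (snd (S ! i)) = fst (snd (bl ! i))"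
    using assms by (simp add: block_ok_def)
  then show "\<And>i. i < length bl \<Longrightarrow> length (snd (S ! i)) = length (fst (snd (bl ! i)))"
    by (metis length_map)
qed

lemma map_fst_pmeet: "length ps1 = length ps2 \<Longrightarrow> map fst (pmeet ps1 ps2) = map fst ps1"
  by (intro nth_equalityI) (auto simp: pmeet_len pmeet_nth)

lemma block_meet:
  assumes d: "distinct (map fst S0 @ map fst bl)" and ng: "block_no_guard bl"
    and b1: "block_ok S0 bl S1" and b2: "block_ok S0 bl S2"
  shows "block_ok S0 bl (smeet S1 S2)"
proof -
  note f1 = block_facts[OF b1] and f2 = block_facts[OF b2]
  have sh: "shape_ok (S0 @ S1) (S0 @ S2)"
    unfolding shape_ok_def
  proof (intro conjI allI impI)
    show "map fst (S0 @ S1) = map fst (S0 @ S2)" using f1 f2 by simp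
    show "distinct (map fst (S0 @ S1))" using f1 d by simp
    fix i assume i: "i < length (S0 @ S1)"
    show "length (snd ((S0 @ S1) ! i)) = length (snd ((S0 @ S2) ! i))"
    proof (cases "i < length S0")
      case True then show ?thesis by (simp add: nth_append)
    next
      case False
      then have "i - length S0 < length bl" using i f1 by simp
      then show ?thesis using False f1 f2 by (simp add: nth_append)
    qed
  qed
  show ?thesis unfolding block_ok_def
  proof (intro conjI allI impI)
    show "length (smeet S1 S2) = length bl" using f1 f2 by (simp add: smeet_len)
    fix i assume i: "i < length bl"
    have sm: "smeet S1 S2 ! i = (fst (S1 ! i), pmeet (snd (S1 ! i)) (snd (S2 ! i)))"
      using i f1 f2 by (simp add: smeet_nth)
    show "fst (smeet S1 S2 ! i) = fst (bl ! i)" using sm b1 i by (simp add: block_ok_def)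
    have ll: "length (snd (S1 ! i)) = length (snd (S2 ! i))" using f1 f2 i by simp
    show "map fst (snd (smeet S1 S2 ! i)) = fst (snd (bl ! i))"
      using sm map_fst_pmeet[OF ll] f1 i by simp
    have mf: "map fst (snd (S1 ! i)) = map fst (snd (S2 ! i))" using f1 f2 i by simp
    have "bl ! i \<in> set bl" using i by simp
    then have "case bl ! i of (t, as, A) \<Rightarrow> decl_no_guard A"
      using ng unfolding block_no_guard_def by (rule bspec[rotated])
    then have dng: "decl_no_guard (snd (snd (bl ! i)))"
      by (simp add: case_prod_beta)
    have "decl_ok (smeet (S0 @ S1) (S0 @ S2)) (cmeet (map_of (snd (S1 ! i))) (map_of (snd (S2 ! i))))
           (snd (snd (bl ! i)))"
      using decl_meet[OF sh _ _ dng] b1 b2 i by (auto simp: block_ok_def)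
    then show "decl_ok (S0 @ smeet S1 S2) (map_of (snd (smeet S1 S2 ! i))) (snd (snd (bl ! i)))"
      using sm by (simp add: smeet_append map_of_pmeet[OF mf])
  qed
qed

lemma Ind_le: "Ind \<le> (m :: mode)"
  by (cases m) (auto simp: less_eq_mode_def)

lemma part1:
  assumes wf: "sig_wf S" and ng: "no_guard t" and h: "has_mode S G t m"
  shows "\<exists>Gmin. dom Gmin = dom G \<and> has_mode S Gmin t m \<and>
               (\<forall>G'. dom G' = dom G \<and> has_mode S G' t m \<longrightarrow> ctx_le Gmin G')"
proof -
  define V where "V = {G'. dom G' = dom G \<and> has_mode S G' t m}"
  have closed: "cmeet x y \<in> V" if "x \<in> V" "y \<in> V" for x y
  proof -
    have "dom (cmeet x y) = dom x \<inter> dom y"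
      by (auto simp: cmeet_def split: option.splits)
    then have "dom (cmeet x y) = dom G" using that by (simp add: V_def)
    moreover have "has_mode (smeet S S) (cmeet x y) t m"
      using has_mode_meet[of S S t x m y] that wf ng by (auto simp: V_def sig_wf_def)
    ultimately show ?thesis by (simp add: V_def smeet_self)
  qed
  have le: "the (cmeet x y a) \<le> the (x a) \<and> the (cmeet x y a) \<le> the (y a)"
    if "x \<in> V" "y \<in> V" for a x y
  proof (cases "x a")
    case None
    then have "a \<notin> dom y" using that by (auto simp: V_def)
    then have "y a = None" by auto
    then show ?thesis using None by (simp add: cmeet_def)
  next
    case (Some u)
    then have "a \<in> dom y" using that by (auto simp: V_def)
    then obtain v where "y a = Some v" by auto
    then show ?thesis using Some by (simp add: cmeet_def)
  qed
  have "G \<in> V" using h by (simp add: V_def)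
  from abstract_min[of G V "fv t" cmeet "\<lambda>a G'. the (G' a)", OF this finite_fv closed le]
  obtain z where z: "z \<in> V" "\<forall>a\<in>fv t. \<forall>x\<in>V. the (z a) \<le> the (x a)" by blast
  define Gmin where "Gmin = (\<lambda>a. if a \<in> dom G then (if a \<in> fv t then z a else Some Ind) else None)"
  have dz: "dom z = dom G" using z by (simp add: V_def)
  have "a \<in> dom Gmin \<longleftrightarrow> a \<in> dom G" for a
  proof -
    have "a \<in> dom z \<longleftrightarrow> a \<in> dom G" using dz by simp
    then show ?thesis unfolding Gmin_def by (auto simp: domIff)
  qed
  then have "dom Gmin = dom G" by blast
  moreover have "has_mode S Gmin t m"
  proof -
    have "\<forall>a\<in>fv t. Gmin a = z a" using dz by (auto simp: Gmin_def)
    then show ?thesis using has_mode_local[OF ng, of Gmin z S m] z by (simp add: V_def)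
  qed
  moreover have "ctx_le Gmin G'" if "dom G' = dom G" "has_mode S G' t m" for G'
    unfolding ctx_le_def
  proof (intro conjI allI impI)
    show "dom Gmin = dom G'" using that \<open>dom Gmin = dom G\<close> by simp
    fix a x y assume a: "Gmin a = Some x" "G' a = Some y"
    show "x \<le> y"
    proof (cases "a \<in> fv t")
      case True
      then have "z a = Some x" using a by (auto simp: Gmin_def split: if_splits)
      moreover have "G' \<in> V" using that by (simp add: V_def)
      ultimately show ?thesis using z True a by force
    next
      case False
      then show ?thesis using a Ind_le by (auto simp: Gmin_def split: if_splits)
    qed
  qed
  ultimately show ?thesis by blast
qed


lemma part2:
  assumes d: "distinct (map fst S0 @ map fst bl)" and ng: "block_no_guard bl"
    and b: "block_ok S0 bl Sb"
  shows "\<exists>Smin. block_ok S0 bl Smin \<and> (\<forall>S'. block_ok S0 bl S' \<longrightarrow> sig_le Smin S')"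
proof -
  define V where "V = {S. block_ok S0 bl S}"
  define C where "C = (SIGMA i:{..<length bl}. {..<length (fst (snd (bl ! i)))})"
  define val where "val = (\<lambda>(i, j) (S :: sig). snd (snd (S ! i) ! j))"
  have fin: "finite C" unfolding C_def by auto
  have closed: "smeet x y \<in> V" if "x \<in> V" "y \<in> V" for x y
    using block_meet[OF d ng] that by (simp add: V_def)
  have le: "val c (smeet x y) \<le> val c x \<and> val c (smeet x y) \<le> val c y"
    if cC: "c \<in> C" and xyV: "x \<in> V" "y \<in> V" for c x y
  proof -
    obtain i j where c: "c = (i, j)" "i < length bl" "j < length (fst (snd (bl ! i)))"
      using cC by (auto simp: C_def)
    note f1 = block_facts[of S0 bl x] and f2 = block_facts[of S0 bl y]
    have bx: "block_ok S0 bl x" and "block_ok S0 bl y" using xyV by (auto simp: V_def)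
    note f1 = f1[OF bx] and f2 = f2[OF this(2)]
    have "smeet x y ! i = (fst (x ! i), pmeet (snd (x ! i)) (snd (y ! i)))"
      using c f1 f2 by (simp add: smeet_nth)
    moreover have "pmeet (snd (x ! i)) (snd (y ! i)) ! j =
      (fst (snd (x ! i) ! j), min (snd (snd (x ! i) ! j)) (snd (snd (y ! i) ! j)))"
      using c f1 f2 by (simp add: pmeet_nth)
    ultimately show ?thesis using c by (simp add: val_def)
  qed
  have "Sb \<in> V" using b by (simp add: V_def)
  from abstract_min[of Sb V C smeet val, OF this fin closed le]
  obtain z where z: "z \<in> V" "\<forall>c\<in>C. \<forall>x\<in>V. val c z \<le> val c x" by blast
  have "sig_le z S'" if S': "block_ok S0 bl S'" for S'
  proof -
    have bz: "block_ok S0 bl z" using z by (simp add: V_def)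
    note fz = block_facts[OF bz] and f' = block_facts[OF S']
    show ?thesis unfolding sig_le_def
    proof (rule list_all2_all_nthI)
      show "length z = length S'" using fz f' by simp
      fix i assume i: "i < length z"
      then have i': "i < length bl" using fz by simp
      have l: "length (snd (z ! i)) = length (snd (S' ! i))" using fz f' i' by simp
      have "fst (z ! i) = fst (S' ! i)" using fz(2) f'(2) i' by (metis nth_map fz(1) f'(1))
      moreover have "\<forall>j<length (snd (z ! i)). fst (snd (z ! i) ! j) = fst (snd (S' ! i) ! j) \<and>
                 snd (snd (z ! i) ! j) \<le> snd (snd (S' ! i) ! j)"
      proof (intro allI impI conjI)
        fix j assume j: "j < length (snd (z ! i))"
        show "fst (snd (z ! i) ! j) = fst (snd (S' ! i) ! j)"
          using fz(4)[OF i'] f'(4)[OF i'] j l by (metis nth_map)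
        have "(i, j) \<in> C" using j fz(3)[OF i'] i' by (simp add: C_def)
        moreover have "S' \<in> V" using S' by (simp add: V_def)
        ultimately show "snd (snd (z ! i) ! j) \<le> snd (snd (S' ! i) ! j)"
          using z(2) by (force simp: val_def)
      qed
      ultimately show "(\<lambda>(t, ps) (t', ps'). t = t' \<and>
          list_all2 (\<lambda>(a, m) (a', m'). a = a' \<and> m \<le> m') ps ps') (z ! i) (S' ! i)"
        using l by (auto simp: case_prod_beta list_all2_conv_all_nth)
    qed
  qed
  then show ?thesis using z(1) by (auto simp: V_def)
qed

theorem mainTheorem6:
  shows "(\<forall>S G t m. sig_wf S \<and> no_guard t \<and> has_mode S G t m \<longrightarrow>
            (\<exists>Gmin. dom Gmin = dom G \<and> has_mode S Gmin t m \<and>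
               (\<forall>G'. dom G' = dom G \<and> has_mode S G' t m \<longrightarrow> ctx_le Gmin G')))
       \<and> (\<forall>S0 bl Sb. distinct (map fst S0 @ map fst bl) \<and> block_no_guard bl \<and> block_ok S0 bl Sb \<longrightarrow>
            (\<exists>Smin. block_ok S0 bl Smin \<and> (\<forall>S'. block_ok S0 bl S' \<longrightarrow> sig_le Smin S')))"
  using part1 part2 by blast

end
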